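(* Let $\alpha>1$ and $n\ge0$ an integer. (1) $K_\alpha(x;n)$ is a rational function of $x$, smooth on $[0,+\infty)$, with $K_\alpha(x;n)=O(x)$ as $x\to0^+$ and $K_\alpha(x;n)=O(x^{-1})$ as $x\to+\infty$. (2) $K_\alpha(\frac{x}{y};n)=(-1)^nK_\alpha(\frac{y}{x};n)$ for all $x,y>0$. (3) There is a constant $C_n>0$ (depending on $n$ and $\alpha$) such that for all $x,y>0$: $\sup_{x>0}|K_\alpha(x;n)|\le C_n$; $\sup_{y>0}\left|\frac1yK_\alpha(\frac xy;n)\right|\le C_nx^{-1}$; $\sup_{y>0}\left|\frac{d}{dy}\left[\frac1yK_\alpha(\frac xy;n)\right]\right|\le C_nx^{-2}$; $\sup_{x>0}\left|\frac{d}{dy}\left[\frac1yK_\alpha(\frac xy;n)\right]\right|\le C_ny^{-2}$.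
   Context: $K_\alpha(x)=\frac{\sin(\frac{2\pi}{1+\alpha})}{\pi}\frac{x}{1+x^2-2x\cos(\frac{2\pi}{1+\alpha})}$, $D_x=x\frac{d}{dx}$, and $K_\alpha(x;n)=D_x^nK_\alpha(x)$ (with $D_x^0$ the identity). *)

theory Defs
  imports "HOL-Analysis.Analysis" "HOL-Library.Landau_Symbols"
    "HOL-Computational_Algebra.Polynomial"
begin

definition K :: "real \<Rightarrow> real \<Rightarrow> real" where
  "K \<alpha> x = sin (2 * pi / (1 + \<alpha>)) / pi * x / (1 + x\<^sup>2 - 2 * x * cos (2 * pi / (1 + \<alpha>)))"

fun Kn :: "real \<Rightarrow> nat \<Rightarrow> real \<Rightarrow> real" where
  "Kn \<alpha> 0 = K \<alpha>"
| "Kn \<alpha> (Suc n) = (\<lambda>x. x * deriv (Kn \<alpha> n) x)"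

definition smooth_on :: "real set \<Rightarrow> (real \<Rightarrow> real) \<Rightarrow> bool" where
  "smooth_on S f \<longleftrightarrow> (\<exists>g :: nat \<Rightarrow> real \<Rightarrow> real. g 0 = f \<and>
      (\<forall>m. \<forall>x\<in>S. (g m has_real_derivative g (Suc m) x) (at x within S)))"

end

theory Submission
  imports Defs
begin
definition cc :: "real \<Rightarrow> real" where "cc \<alpha> = cos (2*pi/(1+\<alpha>))"
definition QQ :: "real \<Rightarrow> real poly" where "QQ \<alpha> = [:1, -2*cc \<alpha>, 1:]"
definition FF :: "real \<Rightarrow> real poly \<Rightarrow> nat \<Rightarrow> real poly" where
  "FF \<alpha> A k = pderiv A * QQ \<alpha> - smult (of_nat k) (A * pderiv (QQ \<alpha>))"

lemma Qpos: assumes "\<alpha> > 1" shows "poly (QQ \<alpha>) x > 0"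
proof -
  let ?t = "2*pi/(1+\<alpha>)"
  have t0: "0 < ?t" using assms by simp
  have t1: "?t < pi" using assms by (simp add: divide_simps)
  have "sin ?t > 0" using t0 t1 sin_gt_zero by blast
  hence "(cc \<alpha>)^2 < 1" unfolding cc_def using sin_cos_squared_add[of ?t]
    by (smt (verit) zero_less_power)
  moreover have "poly (QQ \<alpha>) x = (x - cc \<alpha>)^2 + (1 - (cc \<alpha>)^2)"
    unfolding QQ_def by (simp add: power2_eq_square algebra_simps)
  ultimately show ?thesis by (smt (verit) zero_le_power2)
qed

lemma rat_deriv:
  assumes "poly (QQ \<alpha>) x \<noteq> 0"
  shows "((\<lambda>x. poly A x / poly (QQ \<alpha>) x ^ k) has_real_derivative
          poly (FF \<alpha> A k) x / poly (QQ \<alpha>) x ^ (k+1)) (at x)"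
proof -
  let ?Q = "QQ \<alpha>"
  have "((\<lambda>x. poly A x / poly ?Q x ^ k) has_real_derivative
     (poly (pderiv A) x * poly ?Q x ^ k - poly A x * (of_nat k * poly ?Q x ^ (k-1) * poly (pderiv ?Q) x)) / (poly ?Q x ^ k * poly ?Q x ^ k)) (at x)"
    using assms by (intro derivative_eq_intros poly_DERIV) auto
  moreover have "(poly (pderiv A) x * poly ?Q x ^ k - poly A x * (of_nat k * poly ?Q x ^ (k-1) * poly (pderiv ?Q) x)) / (poly ?Q x ^ k * poly ?Q x ^ k)
     = poly (FF \<alpha> A k) x / poly (QQ \<alpha>) x ^ (k+1)"
  proof (cases k)
    case 0 then show ?thesis using assms by (simp add: FF_def)
  next
    case (Suc j) then show ?thesis using assms by (simp add: FF_def field_simps)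
  qed
  ultimately show ?thesis by simp
qed
definition ss :: "real \<Rightarrow> real" where "ss \<alpha> = sin (2*pi/(1+\<alpha>)) / pi"

fun RR :: "real \<Rightarrow> nat \<Rightarrow> real poly" where
  "RR \<alpha> 0 = [:ss \<alpha>:]"
| "RR \<alpha> (Suc n) = RR \<alpha> n * QQ \<alpha> + pCons 0 (FF \<alpha> (RR \<alpha> n) (n+1))"

definition hh :: "real \<Rightarrow> nat \<Rightarrow> real \<Rightarrow> real" where
  "hh \<alpha> n x = poly (RR \<alpha> n) x / poly (QQ \<alpha>) x ^ (n+1)"
definition hdv :: "real \<Rightarrow> nat \<Rightarrow> real \<Rightarrow> real" where
  "hdv \<alpha> n x = poly (FF \<alpha> (RR \<alpha> n) (n+1)) x / poly (QQ \<alpha>) x ^ (n+2)"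

lemma hh_deriv: assumes "\<alpha> > 1" shows "(hh \<alpha> n has_real_derivative hdv \<alpha> n x) (at x)"
proof -
  have "poly (QQ \<alpha>) x \<noteq> 0" using Qpos[OF assms] by (metis less_irrefl)
  from rat_deriv[OF this, of "RR \<alpha> n" "n+1"] show ?thesis
    unfolding hh_def[abs_def] hdv_def by simp
qed

lemma hh_Suc: assumes "\<alpha> > 1" shows "hh \<alpha> (Suc n) x = hh \<alpha> n x + x * hdv \<alpha> n x"
proof -
  have "poly (QQ \<alpha>) x \<noteq> 0" using Qpos[OF assms] by (metis less_irrefl)
  then show ?thesis unfolding hh_def hdv_def by (simp add: field_simps)
qed

lemma Kn_eq: assumes "\<alpha> > 1" shows "Kn \<alpha> n = (\<lambda>x. x * hh \<alpha> n x)"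
proof (induction n)
  case 0
  show ?case
  proof
    fix x
    have "poly (QQ \<alpha>) x = 1 + x\<^sup>2 - 2 * x * cos (2 * pi / (1 + \<alpha>))"
      unfolding QQ_def cc_def by (simp add: power2_eq_square algebra_simps)
    then show "Kn \<alpha> 0 x = x * hh \<alpha> 0 x" unfolding hh_def by (simp add: K_def ss_def)
  qed
next
  case (Suc n)
  show ?case
  proof
    fix x
    have "((\<lambda>x. x * hh \<alpha> n x) has_real_derivative (1 * hh \<alpha> n x + x * hdv \<alpha> n x)) (at x)"
      by (intro derivative_eq_intros) (auto intro: hh_deriv[OF assms])
    hence "deriv (Kn \<alpha> n) x = hh \<alpha> n x + x * hdv \<alpha> n x"
      using Suc.IH by (simp add: DERIV_imp_deriv)
    then show "Kn \<alpha> (Suc n) x = x * hh \<alpha> (Suc n) x" by (simp add: hh_Suc[OF assms])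
  qed
qed

lemma Kn_deriv: assumes "\<alpha> > 1" shows "(Kn \<alpha> n has_real_derivative deriv (Kn \<alpha> n) x) (at x)"
proof -
  have "((\<lambda>x. x * hh \<alpha> n x) has_real_derivative (1 * hh \<alpha> n x + x * hdv \<alpha> n x)) (at x)"
    by (intro derivative_eq_intros) (auto intro: hh_deriv[OF assms])
  then show ?thesis using Kn_eq[OF assms] by (simp add: DERIV_imp_deriv)
qed

lemma Kn_Suc_deriv: "Kn \<alpha> (Suc n) x = x * deriv (Kn \<alpha> n) x" by simp

lemma Kn_sym: assumes "\<alpha> > 1" "t > 0" shows "Kn \<alpha> n (1/t) = (-1)^n * Kn \<alpha> n t"
  using assms(2)
proof (induction n arbitrary: t)
  case 0
  have q: "1 + t\<^sup>2 - 2 * t * cos (2 * pi / (1 + \<alpha>)) > 0"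
    using Qpos[OF assms(1), of t] unfolding QQ_def cc_def by (simp add: power2_eq_square algebra_simps)
  have e: "1 + (1/t)\<^sup>2 - 2 * (1/t) * cos (2 * pi / (1 + \<alpha>)) = (1 + t\<^sup>2 - 2 * t * cos (2 * pi / (1 + \<alpha>))) / t^2"
    using 0 by (simp add: field_simps power2_eq_square)
  show ?case unfolding Kn.simps K_def e using q 0 by (simp add: field_simps power2_eq_square)
next
  case (Suc n)
  have d1: "((\<lambda>t. Kn \<alpha> n (1/t)) has_real_derivative deriv (Kn \<alpha> n) (1/t) * (- 1 / t^2)) (at t)"
    using Suc.prems
    by (intro derivative_eq_intros DERIV_chain2[OF Kn_deriv[OF assms(1)]]) (auto simp: field_simps power2_eq_square)
  have d2: "((\<lambda>t. (-1)^n * Kn \<alpha> n t) has_real_derivative (-1)^n * deriv (Kn \<alpha> n) t) (at t)"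
    by (intro derivative_eq_intros) (auto intro: Kn_deriv[OF assms(1)])
  have d1': "((\<lambda>t. (-1)^n * Kn \<alpha> n t) has_real_derivative deriv (Kn \<alpha> n) (1/t) * (- 1 / t^2)) (at t)"
    using has_field_derivative_transform_within_open[OF d1, of "{0<..}"] Suc.IH Suc.prems by auto
  have "deriv (Kn \<alpha> n) (1/t) * (- 1 / t^2) = (-1)^n * deriv (Kn \<alpha> n) t"
    using DERIV_unique[OF d1' d2] .
  then have "deriv (Kn \<alpha> n) (1/t) = - ((-1)^n * deriv (Kn \<alpha> n) t) * t^2"
    using Suc.prems by (simp add: field_simps)
  then show ?case using Suc.prems by (simp add: power2_eq_square)
qed

lemma hh_cont: assumes "\<alpha> > 1" shows "continuous_on S (hh \<alpha> n)"
  using hh_deriv[OF assms] by (meson DERIV_isCont continuous_at_imp_continuous_on)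

lemma hdv_cont: assumes "\<alpha> > 1" shows "continuous_on S (hdv \<alpha> n)"
proof -
  have "\<forall>x. poly (QQ \<alpha>) x ^ (n+2) \<noteq> 0" using Qpos[OF assms] by (metis less_irrefl power_not_zero)
  then show ?thesis unfolding hdv_def[abs_def] by (intro continuous_intros) auto
qed

lemma Mbound: assumes "\<alpha> > 1"
  shows "\<exists>M>0. \<forall>u\<in>{0..1}. \<bar>hh \<alpha> n u\<bar> \<le> M \<and> \<bar>hdv \<alpha> n u\<bar> \<le> M \<and> \<bar>hh \<alpha> (Suc n) u\<bar> \<le> M"
proof -
  let ?f = "\<lambda>u. \<bar>hh \<alpha> n u\<bar> + \<bar>hdv \<alpha> n u\<bar> + \<bar>hh \<alpha> (Suc n) u\<bar>"
  have "continuous_on {0..1} ?f"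
    by (intro continuous_intros hh_cont[OF assms] hdv_cont[OF assms])
  then have "compact (?f ` {0..1})" by (rule compact_continuous_image[OF _ compact_Icc])
  then obtain B where B: "B > 0" "\<forall>y\<in>?f ` {0..1}. norm y \<le> B"
    by (meson compact_imp_bounded bounded_pos)
  show ?thesis
  proof (intro exI[of _ B] conjI ballI)
    fix u :: real assume "u \<in> {0..1}"
    then have "norm (?f u) \<le> B" using B by auto
    then show "\<bar>hh \<alpha> n u\<bar> \<le> B" "\<bar>hdv \<alpha> n u\<bar> \<le> B" "\<bar>hh \<alpha> (Suc n) u\<bar> \<le> B" by auto
  qed (use B in auto)
qed

lemma bounds: assumes "\<alpha> > 1"
  shows "\<exists>C>0. \<forall>t>0. \<bar>Kn \<alpha> n t\<bar> \<le> C \<and> \<bar>t * Kn \<alpha> n t\<bar> \<le> C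
     \<and> \<bar>Kn \<alpha> (Suc n) t + Kn \<alpha> n t\<bar> \<le> C \<and> t^2 * \<bar>Kn \<alpha> (Suc n) t + Kn \<alpha> n t\<bar> \<le> C
     \<and> (t \<le> 1 \<longrightarrow> \<bar>Kn \<alpha> n t\<bar> \<le> C * t)"
proof -
  obtain M where M: "M > 0" "\<And>u. u\<in>{0..1} \<Longrightarrow> \<bar>hh \<alpha> n u\<bar> \<le> M \<and> \<bar>hdv \<alpha> n u\<bar> \<le> M \<and> \<bar>hh \<alpha> (Suc n) u\<bar> \<le> M"
    using Mbound[OF assms] by blast
  have KE: "\<And>m x. Kn \<alpha> m x = x * hh \<alpha> m x" using Kn_eq[OF assms] by simp
  have main: "\<bar>Kn \<alpha> n t\<bar> \<le> 2*M \<and> \<bar>t * Kn \<alpha> n t\<bar> \<le> 2*M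
     \<and> \<bar>Kn \<alpha> (Suc n) t + Kn \<alpha> n t\<bar> \<le> 2*M \<and> t^2 * \<bar>Kn \<alpha> (Suc n) t + Kn \<alpha> n t\<bar> \<le> 2*M
     \<and> (t \<le> 1 \<longrightarrow> \<bar>Kn \<alpha> n t\<bar> \<le> 2*M * t)" if t0: "t > 0" for t
  proof (cases "t \<le> 1")
    case True
    then have Mt: "\<bar>hh \<alpha> n t\<bar> \<le> M" "\<bar>hh \<alpha> (Suc n) t\<bar> \<le> M" using M(2)[of t] t0 by auto
    have a1: "\<bar>Kn \<alpha> n t\<bar> \<le> M * t" using Mt t0 unfolding KE abs_mult
      by (simp add: mult.commute mult_left_mono)
    have a2: "\<bar>Kn \<alpha> (Suc n) t\<bar> \<le> M * t" using Mt t0 unfolding KE abs_mult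
      by (simp add: mult.commute mult_left_mono)
    have tt: "M * t \<le> M" using True M(1) by (simp add: mult_left_le)
    have G: "\<bar>Kn \<alpha> (Suc n) t + Kn \<alpha> n t\<bar> \<le> 2*M*t" using a1 a2 by linarith
    have "t^2 * \<bar>Kn \<alpha> (Suc n) t + Kn \<alpha> n t\<bar> \<le> 1 * (2*M*t)"
      using G True t0 by (intro mult_mono) (auto simp: power_le_one)
    moreover have "\<bar>t * Kn \<alpha> n t\<bar> \<le> 1 * (M*t)" unfolding abs_mult
      using a1 True t0 by (intro mult_mono) auto
    moreover have "2*M*t \<le> 2*M" using tt by linarith
    ultimately have c: "t^2 * \<bar>Kn \<alpha> (Suc n) t + Kn \<alpha> n t\<bar> \<le> 2*M*t" "\<bar>t * Kn \<alpha> n t\<bar> \<le> M*t" "2*M*t \<le> 2*M"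
      by (simp only: mult_1_left)+
    show ?thesis
    proof (intro conjI impI)
      show "\<bar>Kn \<alpha> n t\<bar> \<le> 2*M" using a1 tt M(1) by linarith
      show "\<bar>t * Kn \<alpha> n t\<bar> \<le> 2*M" using c(2) tt M(1) by linarith
      show "\<bar>Kn \<alpha> (Suc n) t + Kn \<alpha> n t\<bar> \<le> 2*M" using G c(3) by (rule order_trans)
      show "t^2 * \<bar>Kn \<alpha> (Suc n) t + Kn \<alpha> n t\<bar> \<le> 2*M" using c(1) c(3) by (rule order_trans)
      show "\<bar>Kn \<alpha> n t\<bar> \<le> 2*M*t" proof -
        have "M*t \<le> 2*M*t" using M(1) t0 by simp
        then show ?thesis using a1 by linarith
      qed
    qed
  next
    case False
    define u where "u = 1 / t"
    have u0: "u > 0" "u \<le> 1" using False t0 unfolding u_def by auto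
    have tu: "t = 1 / u" "t * u = 1" using t0 unfolding u_def by auto
    have Mu: "\<bar>hh \<alpha> n u\<bar> \<le> M" "\<bar>hh \<alpha> (Suc n) u\<bar> \<le> M" "\<bar>hdv \<alpha> n u\<bar> \<le> M"
      using M(2)[of u] u0 by auto
    have S: "\<And>m. Kn \<alpha> m t = (-1)^m * (u * hh \<alpha> m u)"
      using Kn_sym[OF assms u0(1)] tu(1) KE by simp
    have b1: "\<bar>Kn \<alpha> n t\<bar> = u * \<bar>hh \<alpha> n u\<bar>" using S u0 by (simp add: abs_mult)
    have b2: "\<bar>t * Kn \<alpha> n t\<bar> = \<bar>hh \<alpha> n u\<bar>" using S u0 tu
      by (simp add: abs_mult mult.assoc[symmetric])
    have "Kn \<alpha> (Suc n) t + Kn \<alpha> n t = (-1)^Suc n * (u * (hh \<alpha> (Suc n) u - hh \<alpha> n u))"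
      using S[of n] S[of "Suc n"] by (simp add: algebra_simps)
    also have "\<dots> = (-1)^Suc n * (u^2 * hdv \<alpha> n u)"
      using hh_Suc[OF assms, of n u] by (simp add: power2_eq_square)
    finally have b3: "\<bar>Kn \<alpha> (Suc n) t + Kn \<alpha> n t\<bar> = u^2 * \<bar>hdv \<alpha> n u\<bar>" by (simp add: abs_mult)
    have "t^2 * u^2 = (t*u)^2" by (rule power_mult_distrib[symmetric])
    then have "t^2 * u^2 = 1" using tu by simp
    then have b4: "t^2 * (u^2 * \<bar>hdv \<alpha> n u\<bar>) = \<bar>hdv \<alpha> n u\<bar>"
      by (simp add: mult.assoc[symmetric])
    have "u * \<bar>hh \<alpha> n u\<bar> \<le> 1 * M" using Mu u0 by (intro mult_mono) auto
    moreover have "u^2 * \<bar>hdv \<alpha> n u\<bar> \<le> 1 * M" using Mu u0 by (intro mult_mono) (auto simp: power_le_one)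
    ultimately have d: "u * \<bar>hh \<alpha> n u\<bar> \<le> M" "u^2 * \<bar>hdv \<alpha> n u\<bar> \<le> M" by simp_all
    show ?thesis
    proof (intro conjI impI)
      show "\<bar>Kn \<alpha> n t\<bar> \<le> 2*M" unfolding b1 using d(1) M(1) by linarith
      show "\<bar>t * Kn \<alpha> n t\<bar> \<le> 2*M" unfolding b2 using Mu(1) M(1) by linarith
      show "\<bar>Kn \<alpha> (Suc n) t + Kn \<alpha> n t\<bar> \<le> 2*M" unfolding b3 using d(2) M(1) by linarith
      show "t^2 * \<bar>Kn \<alpha> (Suc n) t + Kn \<alpha> n t\<bar> \<le> 2*M" unfolding b3 b4 using Mu(3) M(1) by linarith
    qed (use False in simp)
  qed
  show ?thesis using M(1) main by (intro exI[of _ "2*M"]) auto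
qed

fun Rm :: "real \<Rightarrow> real poly \<Rightarrow> nat \<Rightarrow> nat \<Rightarrow> real poly" where
  "Rm \<alpha> A k 0 = A"
| "Rm \<alpha> A k (Suc m) = FF \<alpha> (Rm \<alpha> A k m) (k+m)"

lemma smooth: assumes "\<alpha> > 1" shows "smooth_on S (Kn \<alpha> n)"
  unfolding smooth_on_def
proof (intro exI[of _ "\<lambda>m x. poly (Rm \<alpha> (pCons 0 (RR \<alpha> n)) (n+1) m) x / poly (QQ \<alpha>) x ^ (n+1+m)"] conjI allI ballI)
  show "(\<lambda>x. poly (Rm \<alpha> (pCons 0 (RR \<alpha> n)) (n+1) 0) x / poly (QQ \<alpha>) x ^ (n+1+0)) = Kn \<alpha> n"
    unfolding Kn_eq[OF assms] hh_def by auto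
  fix m x
  have "poly (QQ \<alpha>) x \<noteq> 0" using Qpos[OF assms] by (metis less_irrefl)
  from rat_deriv[OF this, of "Rm \<alpha> (pCons 0 (RR \<alpha> n)) (n+1) m" "n+1+m"]
  show "((\<lambda>x. poly (Rm \<alpha> (pCons 0 (RR \<alpha> n)) (n+1) m) x / poly (QQ \<alpha>) x ^ (n+1+m)) has_real_derivative
     poly (Rm \<alpha> (pCons 0 (RR \<alpha> n)) (n+1) (Suc m)) x / poly (QQ \<alpha>) x ^ (n+1+Suc m)) (at x within S)"
    by (auto intro: has_field_derivative_at_within simp: add.assoc)
qed

lemma deriv_formula: assumes "\<alpha> > 1" "y \<noteq> 0"
  shows "deriv (\<lambda>t. Kn \<alpha> n (x / t) / t) y = - (Kn \<alpha> (Suc n) (x/y) + Kn \<alpha> n (x/y)) / y^2"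
proof -
  have d: "((\<lambda>t. Kn \<alpha> n (x / t)) has_real_derivative deriv (Kn \<alpha> n) (x/y) * (- x / y^2)) (at y)"
    using assms(2)
    by (intro derivative_eq_intros DERIV_chain2[OF Kn_deriv[OF assms(1)]]) (auto simp: field_simps power2_eq_square)
  have "((\<lambda>t. Kn \<alpha> n (x / t) / t) has_real_derivative
     ((deriv (Kn \<alpha> n) (x/y) * (- x / y^2)) * y - Kn \<alpha> n (x/y) * 1) / (y * y)) (at y)"
    by (rule DERIV_divide[OF d DERIV_ident assms(2)])
  moreover have "((deriv (Kn \<alpha> n) (x/y) * (- x / y^2)) * y - Kn \<alpha> n (x/y) * 1) / (y * y)
     = - (Kn \<alpha> (Suc n) (x/y) + Kn \<alpha> n (x/y)) / y^2"
    using assms(2) by (simp add: field_simps power2_eq_square)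
  ultimately show ?thesis by (simp add: DERIV_imp_deriv)
qed

theorem lemma3p2:
  fixes \<alpha> :: real and n :: nat
  assumes "\<alpha> > 1"
  shows "(\<exists>p q :: real poly. q \<noteq> 0 \<and>
            (\<forall>x\<ge>0. poly q x \<noteq> 0 \<and> Kn \<alpha> n x = poly p x / poly q x))
       \<and> smooth_on {0..} (Kn \<alpha> n)
       \<and> Kn \<alpha> n \<in> O[at_right 0](\<lambda>x. x)
       \<and> Kn \<alpha> n \<in> O[at_top](\<lambda>x. 1 / x)
       \<and> (\<forall>x y. x > 0 \<longrightarrow> y > 0 \<longrightarrow> Kn \<alpha> n (x / y) = (-1) ^ n * Kn \<alpha> n (y / x))
       \<and> (\<exists>C > 0.
            (\<forall>x > 0. \<bar>Kn \<alpha> n x\<bar> \<le> C)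
          \<and> (\<forall>x > 0. \<forall>y > 0. \<bar>Kn \<alpha> n (x / y) / y\<bar> \<le> C / x)
          \<and> (\<forall>x > 0. \<forall>y > 0. \<bar>deriv (\<lambda>t. Kn \<alpha> n (x / t) / t) y\<bar> \<le> C / x\<^sup>2)
          \<and> (\<forall>x > 0. \<forall>y > 0. \<bar>deriv (\<lambda>t. Kn \<alpha> n (x / t) / t) y\<bar> \<le> C / y\<^sup>2))"
proof -
  have Qnz: "\<And>x. poly (QQ \<alpha>) x \<noteq> 0" using Qpos[OF assms] by (metis less_irrefl)
  obtain C where C: "C > 0" "\<And>t. t > 0 \<Longrightarrow> \<bar>Kn \<alpha> n t\<bar> \<le> C \<and> \<bar>t * Kn \<alpha> n t\<bar> \<le> C
     \<and> \<bar>Kn \<alpha> (Suc n) t + Kn \<alpha> n t\<bar> \<le> C \<and> t^2 * \<bar>Kn \<alpha> (Suc n) t + Kn \<alpha> n t\<bar> \<le> C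
     \<and> (t \<le> 1 \<longrightarrow> \<bar>Kn \<alpha> n t\<bar> \<le> C * t)"
    using bounds[OF assms, of n] by blast
  have P1: "\<exists>p q :: real poly. q \<noteq> 0 \<and>
            (\<forall>x\<ge>0. poly q x \<noteq> 0 \<and> Kn \<alpha> n x = poly p x / poly q x)"
  proof (rule exI[of _ "pCons 0 (RR \<alpha> n)"], rule exI[of _ "QQ \<alpha> ^ (n+1)"], intro conjI allI impI)
    show "QQ \<alpha> ^ (n+1) \<noteq> 0" using Qnz by (metis poly_0 power_not_zero)
    fix x :: real
    show "poly (QQ \<alpha> ^ (n + 1)) x \<noteq> 0" using Qnz by (simp add: poly_power)
    show "Kn \<alpha> n x = poly (pCons 0 (RR \<alpha> n)) x / poly (QQ \<alpha> ^ (n + 1)) x"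
      unfolding Kn_eq[OF assms] hh_def by (simp add: poly_power)
  qed
  have P3: "Kn \<alpha> n \<in> O[at_right 0](\<lambda>x. x)"
  proof (rule bigoI[where c = C])
    show "\<forall>\<^sub>F x in at_right 0. norm (Kn \<alpha> n x) \<le> C * norm x"
      unfolding eventually_at_right_field
      by (intro exI[of _ 1]) (use C(2) in auto)
  qed
  have P4: "Kn \<alpha> n \<in> O[at_top](\<lambda>x. 1 / x)"
  proof (rule bigoI[where c = C])
    show "\<forall>\<^sub>F x in at_top. norm (Kn \<alpha> n x) \<le> C * norm (1 / x)"
      using eventually_gt_at_top[of 0]
    proof eventually_elim
      case (elim x)
      then have "x * \<bar>Kn \<alpha> n x\<bar> \<le> C" using C(2)[of x] by (simp add: abs_mult)
      then show ?case using elim by (simp add: field_simps)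
    qed
  qed
  have P5: "\<forall>x y. x > 0 \<longrightarrow> y > 0 \<longrightarrow> Kn \<alpha> n (x / y) = (-1) ^ n * Kn \<alpha> n (y / x)"
  proof (intro allI impI)
    fix x y :: real assume "x > 0" "y > 0"
    then have "x / y = 1 / (y / x)" "y / x > 0" by auto
    then show "Kn \<alpha> n (x / y) = (-1) ^ n * Kn \<alpha> n (y / x)" using Kn_sym[OF assms, of "y/x" n] by simp
  qed
  have P6: "(\<forall>x > 0. \<bar>Kn \<alpha> n x\<bar> \<le> C)
          \<and> (\<forall>x > 0. \<forall>y > 0. \<bar>Kn \<alpha> n (x / y) / y\<bar> \<le> C / x)
          \<and> (\<forall>x > 0. \<forall>y > 0. \<bar>deriv (\<lambda>t. Kn \<alpha> n (x / t) / t) y\<bar> \<le> C / x\<^sup>2)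
          \<and> (\<forall>x > 0. \<forall>y > 0. \<bar>deriv (\<lambda>t. Kn \<alpha> n (x / t) / t) y\<bar> \<le> C / y\<^sup>2)"
  proof (intro conjI allI impI)
    fix x :: real assume "x > 0" then show "\<bar>Kn \<alpha> n x\<bar> \<le> C" using C(2) by blast
  next
    fix x y :: real assume xy: "x > 0" "y > 0"
    let ?t = "x / y"
    have t0: "?t > 0" using xy by simp
    have "\<bar>?t * Kn \<alpha> n ?t\<bar> \<le> C" using C(2)[OF t0] by blast
    then have A: "\<bar>?t * Kn \<alpha> n ?t\<bar> / x \<le> C / x" using xy by (intro divide_right_mono) auto
    have E: "\<bar>Kn \<alpha> n (x / y) / y\<bar> = \<bar>?t * Kn \<alpha> n ?t\<bar> / x" using xy by (simp add: abs_mult field_simps)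
    show "\<bar>Kn \<alpha> n (x / y) / y\<bar> \<le> C / x" unfolding E by (rule A)
  next
    fix x y :: real assume xy: "x > 0" "y > 0"
    let ?t = "x / y"
    have t0: "?t > 0" using xy by simp
    have "?t^2 * \<bar>Kn \<alpha> (Suc n) ?t + Kn \<alpha> n ?t\<bar> \<le> C" using C(2)[OF t0] by blast
    then have A: "?t^2 * \<bar>Kn \<alpha> (Suc n) ?t + Kn \<alpha> n ?t\<bar> / x^2 \<le> C / x^2" by (intro divide_right_mono) auto
    have E: "\<bar>deriv (\<lambda>t. Kn \<alpha> n (x / t) / t) y\<bar> = ?t^2 * \<bar>Kn \<alpha> (Suc n) ?t + Kn \<alpha> n ?t\<bar> / x^2"
    proof -
      have "?t^2 / x^2 = 1 / y^2" using xy by (simp add: field_simps power2_eq_square)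
      then have "?t^2 * \<bar>Kn \<alpha> (Suc n) ?t + Kn \<alpha> n ?t\<bar> / x^2 = \<bar>Kn \<alpha> (Suc n) ?t + Kn \<alpha> n ?t\<bar> / y^2"
        by (metis (no_types, lifting) times_divide_eq_left times_divide_eq_right mult.commute divide_divide_eq_left mult_1)
      moreover have "y \<noteq> 0" using xy by simp
      ultimately show ?thesis unfolding deriv_formula[OF assms \<open>y \<noteq> 0\<close>, of n x] by (simp only: abs_divide abs_minus abs_power2)
    qed
    show "\<bar>deriv (\<lambda>t. Kn \<alpha> n (x / t) / t) y\<bar> \<le> C / x\<^sup>2" unfolding E by (rule A)
  next
    fix x y :: real assume xy: "x > 0" "y > 0"
    let ?t = "x / y"
    have t0: "?t > 0" using xy by simp
    have "\<bar>Kn \<alpha> (Suc n) ?t + Kn \<alpha> n ?t\<bar> \<le> C" using C(2)[OF t0] by blast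
    then have A: "\<bar>Kn \<alpha> (Suc n) ?t + Kn \<alpha> n ?t\<bar> / y^2 \<le> C / y^2" by (intro divide_right_mono) auto
    have E: "\<bar>deriv (\<lambda>t. Kn \<alpha> n (x / t) / t) y\<bar> = \<bar>Kn \<alpha> (Suc n) ?t + Kn \<alpha> n ?t\<bar> / y^2"
    proof -
      have "y \<noteq> 0" using xy by simp
      show ?thesis unfolding deriv_formula[OF assms \<open>y \<noteq> 0\<close>, of n x] by (simp only: abs_divide abs_minus abs_power2)
    qed
    show "\<bar>deriv (\<lambda>t. Kn \<alpha> n (x / t) / t) y\<bar> \<le> C / y\<^sup>2" unfolding E by (rule A)
  qed
  have P2: "smooth_on {0..} (Kn \<alpha> n)" by (rule smooth[OF assms])
  have P7: "\<exists>C > 0.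
            (\<forall>x > 0. \<bar>Kn \<alpha> n x\<bar> \<le> C)
          \<and> (\<forall>x > 0. \<forall>y > 0. \<bar>Kn \<alpha> n (x / y) / y\<bar> \<le> C / x)
          \<and> (\<forall>x > 0. \<forall>y > 0. \<bar>deriv (\<lambda>t. Kn \<alpha> n (x / t) / t) y\<bar> \<le> C / x\<^sup>2)
          \<and> (\<forall>x > 0. \<forall>y > 0. \<bar>deriv (\<lambda>t. Kn \<alpha> n (x / t) / t) y\<bar> \<le> C / y\<^sup>2)"
    by (rule exI[of _ C]) (rule conjI[OF C(1) P6])
  show ?thesis by (intro conjI P1 P2 P3 P4 P5 P7)
qed
end
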